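(* Let $1\leq k\leq n$ and let $\Lambda_1,\dots,\Lambda_d\subset\mathbb{P}^n$ be $(k-1)$-dimensional linear subspaces satisfying $\mathrm{SP}(n-k)$. Let $1\leq r\leq d-2$ be an integer and let $(p_{r+1},\dots,p_{d-1})\in\Lambda_{r+1}\times\dots\times\Lambda_{d-1}$ be points such that $\mathrm{Span}(p_{r+1},\dots,p_{d-1})\cap\Lambda_d=\emptyset$. Then $\Lambda_d\subset\mathrm{Span}(\Lambda_1,\dots,\Lambda_r,p_{r+1},\dots,p_{d-1})$.
   Context: $(k-1)$-dimensional linear subspaces $\Lambda_1,\dots,\Lambda_d\subset\mathbb{P}^n$ (not necessarily distinct) satisfy $\mathrm{SP}(n-k)$ if for every $j\in\{1,\dots,d\}$ and every $(n-k)$-dimensional linear subspace $L\subset\mathbb{P}^n$ meeting each $\Lambda_i$ with $i\neq j$, $L$ also meets $\Lambda_j$. *)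

theory Defs
  imports "HOL-Analysis.Analysis"
begin

text \<open>Projective space P^n over the complex numbers is modelled as lines in
  complex^'n with CARD('n) = n+1.  A projective linear subspace of dimension m
  corresponds to a linear subspace of complex^'n of (vector space) dimension m+1.\<close>

definition proj_lin :: "nat \<Rightarrow> (complex ^ 'n) set \<Rightarrow> bool" where
  "proj_lin m V \<longleftrightarrow> vec.subspace V \<and> vec.dim V = m + 1"

definition meets :: "(complex ^ 'n) set \<Rightarrow> (complex ^ 'n) set \<Rightarrow> bool" where
  "meets V W \<longleftrightarrow> (\<exists>x. x \<noteq> 0 \<and> x \<in> V \<and> x \<in> W)"

text \<open>SP(m) for the family Lambda 0, ..., Lambda (d-1) (paper's Lambda_1..Lambda_d).\<close>
definition SP :: "nat \<Rightarrow> nat \<Rightarrow> (nat \<Rightarrow> (complex ^ 'n) set) \<Rightarrow> bool" where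
  "SP m d Lam \<longleftrightarrow> (\<forall>j<d. \<forall>L. proj_lin m L \<longrightarrow>
       (\<forall>i<d. i \<noteq> j \<longrightarrow> meets L (Lam i)) \<longrightarrow> meets L (Lam j))"

end

theory Submission
  imports Defs
begin

lemma dimD:
  fixes A B :: "('a::field ^ 'n) set"
  assumes "vec.subspace A" "vec.subspace B" "A \<inter> B \<subseteq> {0}"
  shows "vec.dim (vec.span (A \<union> B)) = vec.dim A + vec.dim B"
proof -
  have "vec.span (A \<union> B) = {x + y |x y. x \<in> A \<and> y \<in> B}"
  proof -
    have hA: "vec.span A = A" by (rule vec.span_eq_iff[THEN iffD2, OF assms(1)])
    have hB: "vec.span B = B" by (rule vec.span_eq_iff[THEN iffD2, OF assms(2)])
    show ?thesis unfolding vec.span_Un hA hB by (rule refl)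
  qed
  note eq = this
  have z: "vec.dim (A \<inter> B) = 0" using assms(3) by simp
  show ?thesis unfolding eq using z vec.dim_sums_Int[OF assms(1,2)] by linarith
qed

lemma insert_meet:
  fixes Q W :: "('a::field ^ 'n) set"
  assumes "vec.subspace Q" "v \<notin> vec.span (Q \<union> W)" "Q \<inter> W \<subseteq> {0}" "vec.subspace W"
  shows "vec.span (insert v Q) \<inter> W \<subseteq> {0}"
proof
  fix x assume x: "x \<in> vec.span (insert v Q) \<inter> W"
  have hQ: "vec.span Q = Q" by (rule vec.span_eq_iff[THEN iffD2, OF assms(1)])
  obtain c where "x - c *s v \<in> vec.span Q" using vec.span_breakdown_eq[of x v Q] x by auto
  hence c: "x - c *s v \<in> Q" unfolding hQ .
  show "x \<in> {0}"
  proof (cases "c = 0")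
    case True thus ?thesis using c x assms(3) by auto
  next
    case False
    have "x \<in> vec.span (Q \<union> W)" using x by (auto intro: vec.span_base)
    moreover have "x - c *s v \<in> vec.span (Q \<union> W)" using c by (auto intro: vec.span_base)
    ultimately have "x - (x - c *s v) \<in> vec.span (Q \<union> W)" by (rule vec.span_diff)
    hence "c *s v \<in> vec.span (Q \<union> W)" by simp
    hence "(1/c) *s (c *s v) \<in> vec.span (Q \<union> W)" by (rule vec.span_scale)
    hence "v \<in> vec.span (Q \<union> W)" using False by simp
    thus ?thesis using assms(2) by blast
  qed
qed

lemma extend:
  fixes Q W :: "(complex ^ 'n) set"
  assumes "vec.subspace Q" "vec.subspace W" "Q \<inter> W \<subseteq> {0}"
    "vec.dim Q \<le> m" "vec.dim W + m = CARD('n)"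
  shows "\<exists>L. vec.subspace L \<and> vec.dim L = m \<and> Q \<subseteq> L \<and> L \<inter> W \<subseteq> {0}"
  using assms
proof (induction "m - vec.dim Q" arbitrary: Q)
  case 0
  hence "vec.dim Q = m" by linarith
  thus ?case using 0 by blast
next
  case (Suc t)
  have "vec.dim (vec.span (Q \<union> W)) = vec.dim Q + vec.dim W" using dimD Suc.prems by blast
  also have "\<dots> < CARD('n)" using Suc by linarith
  finally have "vec.span (Q \<union> W) \<noteq> UNIV" using vec_dim_card by (metis less_irrefl vec.dim_span)
  then obtain v where v: "v \<notin> vec.span (Q \<union> W)" by blast
  have vQ: "v \<notin> vec.span Q" using v by (meson in_mono sup_ge1 vec.span_mono)
  define Q' where "Q' = vec.span (insert v Q)"
  have 1: "Q' \<inter> W \<subseteq> {0}" unfolding Q'_def using insert_meet Suc.prems v by blast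
  have 2: "vec.dim Q' = vec.dim Q + 1" unfolding Q'_def using vQ by (simp add: vec.dim_insert)
  have 3: "vec.subspace Q'" unfolding Q'_def by simp
  have "vec.dim Q' \<le> m" using 2 Suc by linarith
  then obtain L where L: "vec.subspace L \<and> vec.dim L = m \<and> Q' \<subseteq> L \<and> L \<inter> W \<subseteq> {0}"
    using Suc(1)[of Q'] 1 2 3 Suc by fastforce
  moreover have "Q \<subseteq> Q'" unfolding Q'_def by (meson subset_insertI vec.span_superset subset_trans)
  ultimately show ?case by blast
qed

theorem lemma2p10:
  fixes Lam :: "nat \<Rightarrow> (complex ^ 'n) set"
    and p :: "nat \<Rightarrow> complex ^ 'n"
    and n k d r :: nat
  assumes hn: "CARD('n) = n + 1"
    and hk: "1 \<le> k" "k \<le> n"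
    and hLam: "\<forall>i<d. proj_lin (k - 1) (Lam i)"
    and hSP: "SP (n - k) d Lam"
    and hr: "1 \<le> r" "r + 2 \<le> d"
    and hp: "\<forall>i. r \<le> i \<and> i < d - 1 \<longrightarrow> p i \<noteq> 0 \<and> p i \<in> Lam i"
    and hdisj: "\<not> meets (vec.span (p ` {r..<d - 1})) (Lam (d - 1))"
  shows "Lam (d - 1) \<subseteq> vec.span ((\<Union>i<r. Lam i) \<union> p ` {r..<d - 1})"
proof (rule ccontr)
  define W where "W = Lam (d - 1)"
  define S where "S = vec.span ((\<Union>i<r. Lam i) \<union> p ` {r..<d - 1})"
  assume nWS: "\<not> W \<subseteq> S"
  have subL: "vec.subspace (Lam i)" "vec.dim (Lam i) = k" if "i < d" for i
    using hLam that hk unfolding proj_lin_def by auto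
  have subW: "vec.subspace W" "vec.dim W = k" unfolding W_def using subL hr by auto
  have subS: "vec.subspace S" unfolding S_def by simp
  have LamS: "Lam i \<subseteq> S" if "i < r" for i
    unfolding S_def using that by (meson UN_I lessThan_iff subsetI sup_ge1 subset_trans vec.span_superset)
  have step: "\<exists>Q. vec.subspace Q \<and> Q \<subseteq> S \<and> Q \<inter> W \<subseteq> {0} \<and>
      (\<forall>i<d-1. (i < j \<or> r \<le> i) \<longrightarrow> meets Q (Lam i))" if "j \<le> r" for j
    using that
  proof (induction j)
    case 0
    define Q where "Q = vec.span (p ` {r..<d - 1})"
    have "vec.subspace Q" unfolding Q_def by simp
    moreover have "Q \<subseteq> S" unfolding Q_def S_def by (simp add: vec.span_mono)
    moreover have "Q \<inter> W \<subseteq> {0}" using hdisj unfolding Q_def W_def meets_def by auto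
    moreover have "\<forall>i<d-1. (i < 0 \<or> r \<le> i) \<longrightarrow> meets Q (Lam i)"
    proof (intro allI impI)
      fix i assume "i < d - 1" "i < 0 \<or> r \<le> i"
      hence "p i \<noteq> 0 \<and> p i \<in> Lam i" "p i \<in> Q" using hp unfolding Q_def
        by (auto intro: vec.span_base)
      thus "meets Q (Lam i)" unfolding meets_def by blast
    qed
    ultimately show ?case by blast
  next
    case (Suc j)
    then obtain Q where Q: "vec.subspace Q" "Q \<subseteq> S" "Q \<inter> W \<subseteq> {0}"
      "\<forall>i<d-1. (i < j \<or> r \<le> i) \<longrightarrow> meets Q (Lam i)" by auto
    have jr: "j < r" using Suc by simp
    have jd: "j < d" using jr hr by simp
    show ?case
    proof (cases "\<exists>q. q \<in> Lam j \<and> q \<noteq> 0 \<and> vec.span (insert q Q) \<inter> W \<subseteq> {0}")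
      case True
      then obtain q where q: "q \<in> Lam j" "q \<noteq> 0" "vec.span (insert q Q) \<inter> W \<subseteq> {0}" by blast
      define Q' where "Q' = vec.span (insert q Q)"
      have QQ': "Q \<subseteq> Q'" unfolding Q'_def by (meson subset_insertI vec.span_superset subset_trans)
      have "q \<in> Q'" unfolding Q'_def by (simp add: vec.span_base)
      have "insert q Q \<subseteq> S" using q(1) LamS[OF jr] Q(2) by auto
      hence "Q' \<subseteq> S" unfolding Q'_def using subS by (simp add: vec.span_minimal)
      moreover have "\<forall>i<d-1. (i < Suc j \<or> r \<le> i) \<longrightarrow> meets Q' (Lam i)"
      proof (intro allI impI)
        fix i assume i: "i < d - 1" "i < Suc j \<or> r \<le> i"
        show "meets Q' (Lam i)"
        proof (cases "i = j")
          case True thus ?thesis using q \<open>q \<in> Q'\<close> unfolding meets_def by blast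
        next
          case False
          hence "meets Q (Lam i)" using Q(4) i by auto
          thus ?thesis using QQ' unfolding meets_def by blast
        qed
      qed
      moreover have "vec.subspace Q'" unfolding Q'_def by simp
      ultimately show ?thesis using q(3) unfolding Q'_def by blast
    next
      case False
      have QL: "Q \<inter> Lam j \<subseteq> {0}"
      proof
        fix q assume qq: "q \<in> Q \<inter> Lam j"
        have "vec.span (insert q Q) = Q" using qq Q(1)
          by (metis IntD1 vec.span_eq_iff vec.span_redundant)
        thus "q \<in> {0}" using False qq Q(3) by auto
      qed
      have LQW: "Lam j \<subseteq> vec.span (Q \<union> W)"
      proof
        fix q assume q: "q \<in> Lam j"
        show "q \<in> vec.span (Q \<union> W)"
        proof (rule ccontr)
          assume nq: "q \<notin> vec.span (Q \<union> W)"
          hence "q \<noteq> 0" using vec.span_zero by metis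
          moreover have "vec.span (insert q Q) \<inter> W \<subseteq> {0}"
            using insert_meet[OF Q(1) nq Q(3) subW(1)] .
          ultimately show False using False q by blast
        qed
      qed
      have "vec.span (Q \<union> Lam j) \<subseteq> vec.span (Q \<union> W)"
      proof (rule vec.span_minimal)
        have "Q \<subseteq> vec.span (Q \<union> W)" by (meson sup_ge1 vec.span_superset subset_trans)
        thus "Q \<union> Lam j \<subseteq> vec.span (Q \<union> W)" using LQW by simp
      qed simp
      moreover have "vec.dim (vec.span (Q \<union> Lam j)) = vec.dim (vec.span (Q \<union> W))"
        using dimD[OF Q(1) subL(1)[OF jd] QL] dimD[OF Q(1) subW(1) Q(3)] subL(2)[OF jd] subW(2)
        by simp
      ultimately have "vec.span (Q \<union> Lam j) = vec.span (Q \<union> W)"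
        by (simp add: vec.subspace_dim_equal)
      hence "W \<subseteq> vec.span (Q \<union> Lam j)" by (metis sup_ge2 vec.span_superset subset_trans)
      moreover have "vec.span (Q \<union> Lam j) \<subseteq> S"
        using Q(2) LamS[OF jr] subS by (simp add: vec.span_minimal)
      ultimately show ?thesis using nWS by blast
    qed
  qed
  obtain Q where Q: "vec.subspace Q" "Q \<inter> W \<subseteq> {0}"
      "\<forall>i<d-1. meets Q (Lam i)"
  proof -
    obtain Q where "vec.subspace Q \<and> Q \<subseteq> S \<and> Q \<inter> W \<subseteq> {0} \<and>
      (\<forall>i<d-1. (i < r \<or> r \<le> i) \<longrightarrow> meets Q (Lam i))" using step[of r] by blast
    moreover have "\<And>i. i < r \<or> r \<le> i" by linarith
    ultimately show ?thesis using that by blast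
  qed
  have "vec.dim Q + k \<le> n + 1"
  proof -
    have "vec.dim (vec.span (Q \<union> W)) \<le> vec.dim (UNIV :: (complex ^ 'n) set)"
      by (rule vec.dim_subset) simp
    moreover have "vec.dim (vec.span (Q \<union> W)) = vec.dim Q + k"
      using dimD[OF Q(1) subW(1) Q(2)] subW(2) by simp
    moreover have "vec.dim (UNIV :: (complex ^ 'n) set) = n + 1"
      using vec_dim_card[where 'a=complex and 'n='n] hn by simp
    ultimately show ?thesis by linarith
  qed
  hence "vec.dim Q \<le> n + 1 - k" by simp
  then obtain L where L: "vec.subspace L" "vec.dim L = n + 1 - k" "Q \<subseteq> L" "L \<inter> W \<subseteq> {0}"
    using extend[OF Q(1) subW(1) Q(2), of "n + 1 - k"] subW(2) hn hk by auto
  have hPL: "proj_lin (n - k) L" unfolding proj_lin_def using L hk by simp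
  have hMeet: "\<forall>i<d. i \<noteq> d - 1 \<longrightarrow> meets L (Lam i)"
  proof (intro allI impI)
    fix i assume "i < d" "i \<noteq> d - 1"
    hence "meets Q (Lam i)" using Q(3) by simp
    thus "meets L (Lam i)" using L(3) unfolding meets_def by blast
  qed
  have "meets L W"
  proof -
    have "d - 1 < d" using hr by linarith
    thus ?thesis using hSP hPL hMeet unfolding SP_def W_def by blast
  qed
  thus False using L(4) unfolding meets_def by blast
qed

end
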